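(* Let $\pi=(d_1,\ldots,d_n)$ be a full sequence with $n$ elements, all of whose elements lie in $\{1,\ldots,d_{\max}\}$ (i.e. $\pi=(d_{\max},\ldots,d_{\max},d_{\max}-1,\ldots,d_{\max}-1,\ldots,1,\ldots,1)$), where $d_{\max}$ is its largest element and $d_{\max}\leq n/2$. Then $\pi$ is graphic.
   Context: All graphs are finite, without loops or multiple edges. A sequence $\pi=(d_1,\ldots,d_n)$ of nonnegative integers is called graphic if there exists a graph with $n$ vertices whose vertex degrees are $d_1,\ldots,d_n$; such a graph is called a realization of $\pi$. A sequence $\pi$ with largest element $d_{\max}$ is called a full sequence if every integer $d$ with $1\leq d\leq d_{\max}$ is an element of $\pi$, and the sum of the elements of $\pi$ is even. *)

theory Defs
  imports Main
begin

definition simple_graph_on :: "nat \<Rightarrow> (nat \<Rightarrow> nat \<Rightarrow> bool) \<Rightarrow> bool" where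
  "simple_graph_on n E \<longleftrightarrow>
     (\<forall>u v. E u v \<longrightarrow> E v u) \<and> (\<forall>u. \<not> E u u) \<and> (\<forall>u v. E u v \<longrightarrow> u < n \<and> v < n)"

definition degree_in :: "nat \<Rightarrow> (nat \<Rightarrow> nat \<Rightarrow> bool) \<Rightarrow> nat \<Rightarrow> nat" where
  "degree_in n E u = card {v. v < n \<and> E u v}"

text \<open>A sequence (d_1,...,d_n) (0-indexed list) is graphic if some simple graph on n
  vertices has vertex i of degree d!i.\<close>
definition graphic :: "nat list \<Rightarrow> bool" where
  "graphic d \<longleftrightarrow> (\<exists>E. simple_graph_on (length d) E \<and>
      (\<forall>i < length d. degree_in (length d) E i = d ! i))"

definition full_sequence :: "nat list \<Rightarrow> bool" where
  "full_sequence d \<longleftrightarrow> d \<noteq> [] \<and> (\<forall>k. 1 \<le> k \<and> k \<le> Max (set d) \<longrightarrow> k \<in> set d)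
      \<and> even (sum_list d)"

end

theory Submission imports Defs "HOL-Combinatorics.List_Permutation" begin

lemma graphic_nil: "graphic []"
  unfolding graphic_def simple_graph_on_def by (rule exI[of _ "\<lambda>_ _. False"]) simp

lemma graphic_perm:
  assumes g: "graphic xs" and p: "mset ys = mset xs"
  shows "graphic ys"
proof -
  have len: "length ys = length xs" using p by (metis size_mset)
  obtain f where bij: "bij_betw f {..<length ys} {..<length xs}"
    and fx: "\<forall>i<length ys. ys ! i = xs ! (f i)"
    using permutation_Ex_bij[OF p] by blast
  obtain E where E: "simple_graph_on (length xs) E"
    and deg: "\<forall>i<length xs. degree_in (length xs) E i = xs ! i"
    using g unfolding graphic_def by blast
  define n where "n = length xs"
  define E' where "E' u v = (u < n \<and> v < n \<and> E (f u) (f v))" for u v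
  have bij': "bij_betw f {..<n} {..<n}" using bij len n_def by simp
  have sg: "simple_graph_on n E'"
    using E unfolding simple_graph_on_def E'_def n_def by auto
  have "degree_in n E' u = ys ! u" if u: "u < n" for u
  proof -
    have fu: "f u < n" using bij' u by (auto simp: bij_betw_def)
    have "{v. v < n \<and> E' u v} = {v. v < n \<and> E (f u) (f v)}" using u by (auto simp: E'_def)
    moreover have "f ` {v. v < n \<and> E (f u) (f v)} = {w. w < n \<and> E (f u) w}"
    proof
      show "f ` {v. v < n \<and> E (f u) (f v)} \<subseteq> {w. w < n \<and> E (f u) w}"
        using bij' by (auto simp: bij_betw_def)
      show "{w. w < n \<and> E (f u) w} \<subseteq> f ` {v. v < n \<and> E (f u) (f v)}"
      proof
        fix w assume w: "w \<in> {w. w < n \<and> E (f u) w}"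
        then obtain v where "v < n" "w = f v" using bij' by (auto simp: bij_betw_def image_iff)
        then show "w \<in> f ` {v. v < n \<and> E (f u) (f v)}" using w by auto
      qed
    qed
    moreover have "inj_on f {v. v < n \<and> E (f u) (f v)}"
      using bij' by (auto simp: bij_betw_def intro: inj_on_subset)
    ultimately have "degree_in n E' u = degree_in n E (f u)"
      unfolding degree_in_def by (metis card_image)
    also have "\<dots> = xs ! (f u)" using deg fu n_def by simp
    also have "\<dots> = ys ! u" using fx u len n_def by simp
    finally show ?thesis .
  qed
  then show ?thesis unfolding graphic_def using sg len n_def by auto
qed

lemma graphic_snoc0:
  assumes "graphic xs" shows "graphic (xs @ [0])"
proof -
  obtain E where E: "simple_graph_on (length xs) E"
    and deg: "\<forall>i<length xs. degree_in (length xs) E i = xs ! i"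
    using assms unfolding graphic_def by blast
  have sg: "simple_graph_on (Suc (length xs)) E" using E unfolding simple_graph_on_def by (meson less_SucI)
  have "degree_in (Suc (length xs)) E i = (xs @ [0]) ! i" if "i < Suc (length xs)" for i
  proof (cases "i < length xs")
    case True
    have "{v. v < Suc (length xs) \<and> E i v} = {v. v < length xs \<and> E i v}"
      using E unfolding simple_graph_on_def by auto
    then show ?thesis using deg True by (simp add: degree_in_def nth_append)
  next
    case False
    then have "{v. v < Suc (length xs) \<and> E i v} = {}"
      using E unfolding simple_graph_on_def by auto
    then show ?thesis using False that by (simp add: degree_in_def nth_append)
  qed
  then show ?thesis unfolding graphic_def using sg by auto
qed

lemma graphic_zeros: "graphic xs \<Longrightarrow> \<forall>y\<in>set ys. y = 0 \<Longrightarrow> graphic (xs @ ys)"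
proof (induction ys rule: rev_induct)
  case Nil then show ?case by simp
next
  case (snoc y ys)
  then show ?case using graphic_snoc0[of "xs @ ys"] by simp
qed

lemma graphic_filter0:
  assumes "graphic (filter (\<lambda>x. x \<noteq> 0) xs)" shows "graphic xs"
proof -
  have "graphic (filter (\<lambda>x. x \<noteq> 0) xs @ filter (\<lambda>x. \<not> x \<noteq> 0) xs)"
    by (rule graphic_zeros[OF assms]) auto
  moreover have "mset xs = mset (filter (\<lambda>x. x \<noteq> 0) xs @ filter (\<lambda>x. \<not> x \<noteq> 0) xs)"
    by (induction xs) auto
  ultimately show ?thesis using graphic_perm by blast
qed


lemma graphic_star:
  assumes la: "length a = k" and pos: "\<forall>x\<in>set a. 1 \<le> x"
    and g: "graphic (map (\<lambda>x. x - 1) a @ b)"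
  shows "graphic (k # a @ b)"
proof -
  define n where "n = length (a @ b)"
  obtain E where E: "simple_graph_on n E"
    and deg: "\<forall>i<n. degree_in n E i = (map (\<lambda>x. x - 1) a @ b) ! i"
    using g unfolding graphic_def n_def by auto
  define E' where "E' u v = ((u = 0 \<and> 1 \<le> v \<and> v \<le> k) \<or> (v = 0 \<and> 1 \<le> u \<and> u \<le> k)
     \<or> (0 < u \<and> 0 < v \<and> E (u - 1) (v - 1)))" for u v
  have kn: "k \<le> n" using la n_def by simp
  have sg: "simple_graph_on (Suc n) E'"
    using E kn unfolding simple_graph_on_def E'_def by auto (metis Suc_less_eq Suc_pred)+
  have "degree_in (Suc n) E' u = (k # a @ b) ! u" if u: "u < Suc n" for u
  proof (cases u)
    case 0
    have "{v. v < Suc n \<and> E' u v} = {1..k}" using 0 kn E unfolding E'_def simple_graph_on_def by auto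
    then show ?thesis using 0 by (simp add: degree_in_def)
  next
    case (Suc i)
    have i: "i < n" using u Suc by simp
    have "{v. v < Suc n \<and> E' u v} = (if i < k then {0} else {}) \<union> Suc ` {w. w < n \<and> E i w}"
      using Suc E unfolding E'_def simple_graph_on_def
      by (auto simp: image_iff) (metis Suc_pred)+
    then have "degree_in (Suc n) E' u = (if i < k then 1 else 0) + degree_in n E i"
      by (simp add: degree_in_def card_image)
    also have "\<dots> = (k # a @ b) ! u"
      using deg i Suc la pos by (auto simp: nth_append) (metis Suc_pred nth_mem le_less_trans less_numeral_extra(1) le_eq_less_or_eq One_nat_def Suc_le_eq)
    finally show ?thesis .
  qed
  then show ?thesis unfolding graphic_def using sg n_def by auto
qed


lemma sum_list_ones: "\<forall>x\<in>set xs. x = (1::nat) \<Longrightarrow> sum_list xs = length xs"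
  by (induction xs) auto

lemma key:
  fixes m :: nat and a b :: "nat list"
  assumes m1: "1 \<le> m" and la: "length a = m"
    and rng: "\<forall>x\<in>set a \<union> set b. 1 \<le> x \<and> x \<le> m"
    and ord: "\<forall>x\<in>set a. \<forall>y\<in>set b. y \<le> x"
    and full: "\<forall>k. 1 \<le> k \<and> k \<le> m \<longrightarrow> k = m \<or> k \<in> set a \<or> k \<in> set b"
    and len: "2 * m \<le> 1 + length a + length b"
    and dd: "d' = filter (\<lambda>x. x \<noteq> 0) (map (\<lambda>x. x - 1) a @ b)"
    and ne: "d' \<noteq> []" and ev: "even (sum_list d')"
  shows "(\<forall>k. 1 \<le> k \<and> k \<le> Max (set d') \<longrightarrow> k \<in> set d') \<and> 2 * Max (set d') \<le> length d'"
proof -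
  define M where "M = Max (set d')"
  have memd: "k \<in> set d' \<longleftrightarrow> (k + 1 \<in> set a \<or> k \<in> set b)" if k1: "1 \<le> k" for k
  proof -
    have "k \<in> set d' \<longleftrightarrow> (k \<in> (\<lambda>x. x - 1) ` set a \<or> k \<in> set b)" using k1 unfolding dd by auto
    moreover have "k \<in> (\<lambda>x. x - 1) ` set a \<longleftrightarrow> k + 1 \<in> set a"
    proof
      assume "k \<in> (\<lambda>x. x - 1) ` set a"
      then obtain x where x1: "x \<in> set a" and x2: "k = x - 1" by blast
      have "x = k + 1" using k1 x2 by arith
      then show "k + 1 \<in> set a" using x1 by blast
    next
      assume "k + 1 \<in> set a"
      then show "k \<in> (\<lambda>x. x - 1) ` set a" by (rule rev_image_eqI) simp
    qed
    ultimately show ?thesis by blast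
  qed
  have posd: "\<forall>x\<in>set d'. 1 \<le> x" unfolding dd by auto
  have Md: "M \<in> set d'" using ne unfolding M_def by simp
  have leM: "\<forall>x\<in>set d'. x \<le> M" unfolding M_def by simp
  have M1: "1 \<le> M" using Md posd by blast
  have MaB: "M + 1 \<in> set a \<or> M \<in> set b" using memd[OF M1] Md by blast
  have Mm: "M \<le> m" using MaB rng by (metis Suc_eq_plus1 Suc_leD UnCI)
  have F: "\<forall>k. 1 \<le> k \<and> k \<le> M \<longrightarrow> k \<in> set d'"
  proof (intro allI impI)
    fix k assume k: "1 \<le> k \<and> k \<le> M"
    show "k \<in> set d'"
    proof (rule ccontr)
      assume nk: "k \<notin> set d'"
      then have n1: "k + 1 \<notin> set a" and n2: "k \<notin> set b" using memd k by auto
      have km: "k < m"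
      proof (rule ccontr)
        assume "\<not> k < m"
        then have "k = m" "M = m" using k Mm by auto
        then show False using MaB n2 rng by force
      qed
      have "k + 1 = m \<or> k + 1 \<in> set a \<or> k + 1 \<in> set b" using full km by auto
      moreover have ka: "k \<in> set a" using full k km n2 by auto
      moreover have "k + 1 \<notin> set b" using ord ka by force
      ultimately have km1: "k + 1 = m" using n1 by auto
      have "\<forall>x\<in>set a. x \<le> m - 1"
      proof
        fix x assume "x \<in> set a"
        then have "x \<le> m" "x \<noteq> m" using rng n1 km1 by auto
        then show "x \<le> m - 1" by simp
      qed
      have "\<forall>y\<in>set b. y \<le> k" using ord ka by blast
      then have "\<forall>y\<in>set b. y < k" using n2 by (metis le_neq_implies_less)
      then have "M < k" using MaB \<open>\<forall>x\<in>set a. x \<le> m - 1\<close> km1 by force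
      then show False using k by simp
    qed
  qed
  have lend: "length d' = length (filter (\<lambda>x. x \<noteq> 1) a) + length b"
  proof -
    have "filter (\<lambda>x. x \<noteq> 0) b = b" using rng by (intro filter_True) auto
    moreover have "length (filter (\<lambda>x. x \<noteq> 0) (map (\<lambda>x. x - 1) a)) = length (filter (\<lambda>x. x \<noteq> 1) a)"
    proof -
      have "filter (\<lambda>x. x \<noteq> 0) (map (\<lambda>x. x - 1) a) = map (\<lambda>x. x - 1) (filter (\<lambda>x. x \<noteq> 1) a)"
        using rng by (induction a) auto
      then show ?thesis by simp
    qed
    ultimately show ?thesis unfolding dd by simp
  qed
  have lb: "m - 1 \<le> length b" using len la by simp
  have L: "2 * M \<le> length d'"
  proof (cases "M \<le> 1")
    case True
    then have "\<forall>x\<in>set d'. x = 1" using posd leM by force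
    then have "sum_list d' = length d'" by (rule sum_list_ones)
    then have "even (length d')" using ev by simp
    moreover have "length d' \<noteq> 0" using ne by simp
    ultimately have "2 \<le> length d'" by presburger
    then show ?thesis using True M1 by simp
  next
    case False
    then have M2: "2 \<le> M" by simp
    show ?thesis
    proof (cases "m \<in> set b")
      case True
      have am: "\<forall>x\<in>set a. x = m"
      proof
        fix x assume xa: "x \<in> set a"
        have "m \<le> x" using ord xa True by blast
        moreover have "x \<le> m" using rng xa by blast
        ultimately show "x = m" by simp
      qed
      then have "filter (\<lambda>x. x \<noteq> 1) a = a" using M2 Mm by (intro filter_True) auto
      then have l1: "length d' = m + length b" using lend la by simp
      have "{1..m} \<subseteq> set b"
      proof
        fix k assume "k \<in> {1..m}"
        then have "k = m \<or> k \<in> set a \<or> k \<in> set b" using full by simp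
        moreover have "k \<in> set a \<longrightarrow> k = m" using am by blast
        ultimately show "k \<in> set b" using True by blast
      qed
      then have "card {1..m} \<le> card (set b)" by (metis card_mono finite_set)
      also have "\<dots> \<le> length b" by (rule card_length)
      finally have "m \<le> length b" by simp
      then show ?thesis using l1 Mm by simp
    next
      case False
      have MM: "M \<le> m - 1"
      proof (cases "M \<in> set b")
        case True
        then have "M \<noteq> m" using False by auto
        then show ?thesis using Mm by simp
      next
        case False
        then have "M + 1 \<in> set a" using MaB by simp
        then have "M + 1 \<le> m" using rng by simp
        then show ?thesis by simp
      qed
      define z where "z = length (filter (\<lambda>x. x = 1) a)"
      have zs: "length (filter (\<lambda>x. x \<noteq> 1) a) + z = m"
        using sum_length_filter_compl[of "\<lambda>x. x = 1" a] la z_def by simp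
      show ?thesis
      proof (cases "z \<le> 1")
        case True
        then show ?thesis using zs lend lb MM by linarith
      next
        case False
        then have "filter (\<lambda>x. x = 1) a \<noteq> []" unfolding z_def by auto
        then have "1 \<in> set a" by (auto simp: filter_empty_conv)
        then have b1: "\<forall>y\<in>set b. y \<le> 1" using ord by blast
        have "{2..M+1} \<subseteq> set (filter (\<lambda>x. x \<noteq> 1) a)"
        proof
          fix j assume j: "j \<in> {2..M+1}"
          then have "j \<le> m" using MM M2 by auto
          then have "j = m \<or> j \<in> set a \<or> j \<in> set b" using full j by auto
          moreover have "j = m \<longrightarrow> j \<in> set a"
          proof
            assume jm: "j = m"
            have "M \<notin> set b" using b1 M2 by force
            then have "M + 1 \<in> set a" using MaB by blast
            moreover have "M + 1 = m" using jm j MM M2 by auto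
            ultimately show "j \<in> set a" using jm by simp
          qed
          ultimately show "j \<in> set (filter (\<lambda>x. x \<noteq> 1) a)" using b1 j by auto
        qed
        then have "card {2..M+1} \<le> card (set (filter (\<lambda>x. x \<noteq> 1) a))" by (metis card_mono finite_set)
        also have "\<dots> \<le> length (filter (\<lambda>x. x \<noteq> 1) a)" by (rule card_length)
        finally have "M \<le> length (filter (\<lambda>x. x \<noteq> 1) a)" by simp
        then show ?thesis using zs lend lb False by linarith
      qed
    qed
  qed
  show ?thesis using F L unfolding M_def by blast
qed


lemma sum_list_nz: "sum_list (filter (\<lambda>x. x \<noteq> 0) xs) = sum_list (xs::nat list)"
  by (induction xs) auto

lemma sum_list_dec: "\<forall>x\<in>set a. 1 \<le> x \<Longrightarrow> sum_list (map (\<lambda>x. x - 1) a) + length a = sum_list (a::nat list)"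
  by (induction a) auto

lemma main:
  "\<forall>d. length d = N \<longrightarrow> sorted_wrt (\<ge>) d \<longrightarrow> (\<forall>x\<in>set d. 1 \<le> x)
     \<longrightarrow> (\<forall>k. 1 \<le> k \<and> k \<le> Max (set d) \<longrightarrow> k \<in> set d) \<longrightarrow> even (sum_list d)
     \<longrightarrow> 2 * Max (set d) \<le> length d \<longrightarrow> graphic d"
proof (induction N rule: less_induct)
  case (less N)
  show ?case
  proof (intro allI impI)
    fix d :: "nat list"
    assume ln: "length d = N" and srt: "sorted_wrt (\<ge>) d" and pos: "\<forall>x\<in>set d. 1 \<le> x"
      and full: "\<forall>k. 1 \<le> k \<and> k \<le> Max (set d) \<longrightarrow> k \<in> set d" and ev: "even (sum_list d)"
      and len: "2 * Max (set d) \<le> length d"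
    show "graphic d"
    proof (cases d)
      case Nil
      then show ?thesis by (simp add: graphic_nil)
    next
      case (Cons m r)
      have rm: "\<forall>x\<in>set r. x \<le> m" using srt Cons by simp
      have Mx: "Max (set d) = m" using Cons rm by (auto intro: Max_eqI)
      have m1: "1 \<le> m" using pos Cons by simp
      define a where "a = take m r"
      define b where "b = drop m r"
      have lr: "m \<le> length r" using len Mx Cons m1 by simp
      have la: "length a = m" using lr a_def by simp
      have rab: "r = a @ b" using a_def b_def by simp
      have srtr: "sorted_wrt (\<ge>) (a @ b)" using srt Cons rab by simp
      have ord: "\<forall>x\<in>set a. \<forall>y\<in>set b. y \<le> x" using srtr by (simp add: sorted_wrt_append)
      have rng: "\<forall>x\<in>set a \<union> set b. 1 \<le> x \<and> x \<le> m" using pos rm Cons rab by auto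
      have fullk: "\<forall>k. 1 \<le> k \<and> k \<le> m \<longrightarrow> k = m \<or> k \<in> set a \<or> k \<in> set b"
        using full Mx Cons rab by auto
      have len2: "2 * m \<le> 1 + length a + length b" using len Mx Cons rab by simp
      define d' where "d' = filter (\<lambda>x. x \<noteq> 0) (map (\<lambda>x. x - 1) a @ b)"
      have posa: "\<forall>x\<in>set a. 1 \<le> x" using rng by auto
      have sumd: "sum_list d = 2 * m + sum_list d'"
        using sum_list_dec[OF posa] la unfolding d'_def sum_list_nz Cons rab by simp
      have evd: "even (sum_list d')" using ev sumd by simp
      have gd': "graphic d'"
      proof (cases "d' = []")
        case True then show ?thesis by (simp add: graphic_nil)
      next
        case False
        have K: "(\<forall>k. 1 \<le> k \<and> k \<le> Max (set d') \<longrightarrow> k \<in> set d') \<and> 2 * Max (set d') \<le> length d'"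
          by (rule key[OF m1 la rng ord fullk len2 d'_def False evd])
        define s where "s = rev (sort d')"
        have ms: "mset s = mset d'" unfolding s_def by simp
        have ss: "set s = set d'" using ms by (metis set_mset_mset)
        have ls: "length s = length d'" using ms by (metis size_mset)
        have sums: "sum_list s = sum_list d'" using ms by (metis sum_mset_sum_list)
        have srts: "sorted_wrt (\<ge>) s" unfolding s_def by (simp add: sorted_wrt_rev)
        have ld': "length d' < N"
        proof -
          have "length d' \<le> length (map (\<lambda>x. x - 1) a @ b)" unfolding d'_def by (rule length_filter_le)
          then show ?thesis using ln Cons rab by simp
        qed
        have pos': "\<forall>x\<in>set d'. 1 \<le> x" unfolding d'_def by auto
        have A1: "\<forall>x\<in>set s. 1 \<le> x" using pos' ss by simp
        have A2: "\<forall>k. 1 \<le> k \<and> k \<le> Max (set s) \<longrightarrow> k \<in> set s" using K ss by simp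
        have A3: "even (sum_list s)" using evd sums by simp
        have A4: "2 * Max (set s) \<le> length s" using K ss ls by simp
        have "graphic s" using less.IH[OF ld'[folded ls]] srts A1 A2 A3 A4 by blast
        then show ?thesis by (rule graphic_perm[OF _ ms[symmetric]])
      qed
      then have "graphic (map (\<lambda>x. x - 1) a @ b)" unfolding d'_def by (rule graphic_filter0)
      then have "graphic (m # a @ b)" by (rule graphic_star[OF la posa])
      then show ?thesis using Cons rab by simp
    qed
  qed
qed

theorem lemma4:
  fixes d :: "nat list"
  assumes "full_sequence d"
    and "\<forall>x \<in> set d. 1 \<le> x"
    and "2 * Max (set d) \<le> length d"
  shows "graphic d"
proof -
  define s where "s = rev (sort d)"
  have ms: "mset s = mset d" unfolding s_def by simp
  have ss: "set s = set d" using ms by (metis set_mset_mset)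
  have ls: "length s = length d" using ms by (metis size_mset)
  have sums: "sum_list s = sum_list d" using ms by (metis sum_mset_sum_list)
  have srts: "sorted_wrt (\<ge>) s" unfolding s_def by (simp add: sorted_wrt_rev)
  have A1: "\<forall>x\<in>set s. 1 \<le> x" using assms(2) ss by simp
  have A2: "\<forall>k. 1 \<le> k \<and> k \<le> Max (set s) \<longrightarrow> k \<in> set s"
    using assms(1) ss unfolding full_sequence_def by simp
  have A3: "even (sum_list s)" using assms(1) sums unfolding full_sequence_def by simp
  have A4: "2 * Max (set s) \<le> length s" using assms(3) ss ls by simp
  have "graphic s" using main srts A1 A2 A3 A4 by blast
  then show ?thesis by (rule graphic_perm[OF _ ms[symmetric]])
qed

end
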